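(* Let $D$ be a crossing optimal normalized 2-page book drawing of $K_n$ and $0\le k\le\lfloor n/2\rfloor-2$. Then every $\le k$-edge $ij$ ($i<j$) of $D$ satisfies $i\le k+1$ or $j\ge n-k$; that is, all entries of $M(D)$ representing $\le k$-edges lie in the union of the first $k+1$ rows and the last $k+1$ columns of $M(D)$.
   Context: Normalized 2-page book drawing of $K_n$: vertices $(1,0),\dots,(n,0)$ labelled $1,\dots,n$; edges $i(i+1)$ on the spine; edge $1n$ in the upper half-plane; every other edge $ij$ a semicircle over $[i,j]$ in the upper or lower half-plane. $M(D)$ has entries $(i,j)$, $1\le i<j\le n$ (row $i$, column $j$), representing edge $ij$; its columns are indexed $2,\dots,n$. For distinct vertices $p,q,r$, $r$ is on the left (right) of $\overrightarrow{pq}$ if the triangle with edges $pq,qr,rp$ traced in order $p,q,r$ is counterclockwise (clockwise); an edge is a $k$-edge if exactly $k$ of the other $n-2$ vertices lie on one side of it; each edge has a unique such index in $\{0,\dots,\lfloor n/2\rfloor-1\}$, and a $\le k$-edge is one with index at most $k$. Crossing optimal: exactly $Z(n)=\frac14\lfloor\frac n2\rfloor\lfloor\frac{n-1}2\rfloor\lfloor\frac{n-2}2\rfloor\lfloor\frac{n-3}2\rfloor$ crossings. *)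

theory Defs
  imports Complex_Main
begin

text \<open>A normalized 2-page book drawing of K_n with vertices 1..n on the spine is
determined by the page of every non-spine edge ij (i < j, j \<ge> i+2):
  upper i j = True  iff the semicircle ij lies in the upper half-plane.
Spine edges i(i+1) are drawn on the spine.\<close>

type_synonym book_drawing = "nat \<Rightarrow> nat \<Rightarrow> bool"

definition normalized :: "nat \<Rightarrow> book_drawing \<Rightarrow> bool" where
  "normalized n upper \<longleftrightarrow> upper 1 n"

text \<open>Crossings: two semicircles cross iff they are on the same page and their
endpoints interleave (i < k < j < l); spine edges cross nothing.\<close>

definition crossings :: "nat \<Rightarrow> book_drawing \<Rightarrow> nat" where
  "crossings n upper = card {(i, k, j, l). 1 \<le> i \<and> i < k \<and> k < j \<and> j < l \<and> l \<le> n
                                      \<and> upper i j = upper k l}"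

definition Z :: "nat \<Rightarrow> real" where
  "Z n = (1/4) * real (n div 2) * real ((n - 1) div 2) * real ((n - 2) div 2)
         * real ((n - 3) div 2)"

definition crossing_optimal :: "nat \<Rightarrow> book_drawing \<Rightarrow> bool" where
  "crossing_optimal n upper \<longleftrightarrow> real (crossings n upper) = Z n"

text \<open>With a < b < c the
sorted vertices, the closed curve a \<rightarrow> b \<rightarrow> c \<rightarrow> a is counterclockwise iff the
long edge ac is in the upper half-plane; cyclic rotation preserves and
reversal flips orientation.\<close>

definition ccw :: "book_drawing \<Rightarrow> nat \<Rightarrow> nat \<Rightarrow> nat \<Rightarrow> bool" where
  "ccw upper p q r =
     (let a = min p (min q r); c = max p (max q r) in
      if (p < q \<and> q < r) \<or> (q < r \<and> r < p) \<or> (r < p \<and> p < q)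
      then upper a c else \<not> upper a c)"

definition left_of :: "book_drawing \<Rightarrow> nat \<Rightarrow> nat \<Rightarrow> nat \<Rightarrow> bool" where
  "left_of upper p q r \<longleftrightarrow> ccw upper p q r"

definition right_of :: "book_drawing \<Rightarrow> nat \<Rightarrow> nat \<Rightarrow> nat \<Rightarrow> bool" where
  "right_of upper p q r \<longleftrightarrow> \<not> ccw upper p q r"

definition k_edge :: "nat \<Rightarrow> book_drawing \<Rightarrow> nat \<Rightarrow> nat \<Rightarrow> nat \<Rightarrow> bool" where
  "k_edge n upper k p q \<longleftrightarrow>
     card {r \<in> {1..n} - {p, q}. left_of upper p q r} = k \<or>
     card {r \<in> {1..n} - {p, q}. right_of upper p q r} = k"

definition le_k_edge :: "nat \<Rightarrow> book_drawing \<Rightarrow> nat \<Rightarrow> nat \<Rightarrow> nat \<Rightarrow> bool" where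
  "le_k_edge n upper k p q \<longleftrightarrow> (\<exists>k' \<le> k. k_edge n upper k' p q)"

end

theory Submission
  imports Defs
begin

definition Lf :: "book_drawing \<Rightarrow> nat \<Rightarrow> nat \<Rightarrow> nat \<Rightarrow> nat \<Rightarrow> nat" where
  "Lf u a b i j = card {r \<in> {a..<i}. u r j} + (if u i j then 0 else j - i - 1)
                  + card {r \<in> {j<..b}. u i r}"

definition kf :: "book_drawing \<Rightarrow> nat \<Rightarrow> nat \<Rightarrow> nat \<Rightarrow> nat \<Rightarrow> nat" where
  "kf u a b i j = min (Lf u a b i j) (b - a - 1 - Lf u a b i j)"

lemma card_split_interval:
  fixes j1 j2 b :: nat
  assumes "j1 < j2" "j2 \<le> b"
  shows "card {r \<in> {j1<..b}. P r} = card {r \<in> {j1<..j2}. P r} + card {r \<in> {j2<..b}. P r}"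
proof -
  have "{r \<in> {j1<..b}. P r} = {r \<in> {j1<..j2}. P r} \<union> {r \<in> {j2<..b}. P r}"
    using assms by auto
  moreover have "{r \<in> {j1<..j2}. P r} \<inter> {r \<in> {j2<..b}. P r} = {}" by auto
  ultimately show ?thesis by (simp add: card_Un_disjoint)
qed

lemma card_filter_le: "card {r \<in> A. P r} \<le> card A" if "finite A" for A :: "nat set"
  using that by (intro card_mono) auto

lemma Lf_row: "Lf u a b a j = (if u a j then 0 else j - a - 1) + card {r \<in> {j<..b}. u a r}"
  by (simp add: Lf_def)

lemma row_inj:
  assumes "a < j1" "j1 < j2" "j2 \<le> b"
  shows "Lf u a b a j1 \<noteq> Lf u a b a j2"
proof -
  define X where "X = card {r \<in> {j1<..j2}. u a r}"
  define U2 where "U2 = card {r \<in> {j2<..b}. u a r}"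
  have s: "card {r \<in> {j1<..b}. u a r} = X + U2"
    unfolding X_def U2_def using assms by (intro card_split_interval) auto
  have Xle: "X \<le> j2 - j1"
    unfolding X_def using card_filter_le[of "{j1<..j2}" "u a"] by simp
  have X1: "u a j2 \<Longrightarrow> X \<ge> 1"
  proof -
    assume "u a j2"
    hence "j2 \<in> {r \<in> {j1<..j2}. u a r}" using assms by auto
    hence "{r \<in> {j1<..j2}. u a r} \<noteq> {}" by blast
    thus ?thesis unfolding X_def by (simp add: Suc_le_eq card_gt_0_iff)
  qed
  have X2: "\<not> u a j2 \<Longrightarrow> X \<le> j2 - j1 - 1"
  proof -
    assume "\<not> u a j2"
    hence "{r \<in> {j1<..j2}. u a r} \<subseteq> {j1<..<j2}" using le_neq_implies_less by fastforce
    hence "X \<le> card {j1<..<j2}" unfolding X_def by (intro card_mono) auto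
    thus ?thesis by simp
  qed
  show ?thesis unfolding Lf_row s U2_def[symmetric]
    using assms Xle X1 X2 by (cases "u a j1"; cases "u a j2") auto
qed

lemma Lf_row_le: "a < j \<Longrightarrow> j \<le> b \<Longrightarrow> Lf u a b a j \<le> b - a - 1"
proof -
  assume h: "a < j" "j \<le> b"
  have "card {r \<in> {j<..b}. u a r} \<le> b - j" using card_filter_le[of "{j<..b}" "u a"] by simp
  thus ?thesis unfolding Lf_row using h by auto
qed

lemma row_bij:
  assumes "a < b"
  shows "bij_betw (\<lambda>j. Lf u a b a j) {a<..b} {0..b-a-1}"
proof -
  have inj: "inj_on (\<lambda>j. Lf u a b a j) {a<..b}"
  proof (rule inj_onI)
    fix x y assume "x \<in> {a<..b}" "y \<in> {a<..b}" "Lf u a b a x = Lf u a b a y"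
    thus "x = y" using row_inj[of a x y b u] row_inj[of a y x b u]
      by (cases x y rule: linorder_cases) auto
  qed
  have sub: "(\<lambda>j. Lf u a b a j) ` {a<..b} \<subseteq> {0..b-a-1}" using Lf_row_le by auto
  have "card ((\<lambda>j. Lf u a b a j) ` {a<..b}) = card {0..b-a-1}"
    using card_image[OF inj] assms by simp
  hence "(\<lambda>j. Lf u a b a j) ` {a<..b} = {0..b-a-1}"
    using sub by (intro card_subset_eq) auto
  thus ?thesis using inj by (simp add: bij_betw_def)
qed

definition Pc :: "book_drawing \<Rightarrow> nat \<Rightarrow> nat \<Rightarrow> nat \<Rightarrow> nat" where
  "Pc u a y x = card {r \<in> {a..<x}. u r y} + (if u x y then 0 else y - x - 1)"

lemma card_split_interval2:
  fixes a x1 x2 :: nat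
  assumes "a \<le> x1" "x1 < x2"
  shows "card {r \<in> {a..<x2}. P r} = card {r \<in> {a..<x1}. P r} + card {r \<in> {x1..<x2}. P r}"
proof -
  have "{r \<in> {a..<x2}. P r} = {r \<in> {a..<x1}. P r} \<union> {r \<in> {x1..<x2}. P r}"
    using assms by auto
  moreover have "{r \<in> {a..<x1}. P r} \<inter> {r \<in> {x1..<x2}. P r} = {}" by auto
  ultimately show ?thesis by (simp add: card_Un_disjoint)
qed

lemma col_inj:
  assumes "a \<le> x1" "x1 < x2" "x2 < y"
  shows "Pc u a y x1 \<noteq> Pc u a y x2"
proof -
  define Y where "Y = card {r \<in> {x1..<x2}. u r y}"
  define V1 where "V1 = card {r \<in> {a..<x1}. u r y}"
  have s: "card {r \<in> {a..<x2}. u r y} = V1 + Y"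
    unfolding Y_def V1_def using assms by (intro card_split_interval2) auto
  have Yle: "Y \<le> x2 - x1"
    unfolding Y_def using card_filter_le[of "{x1..<x2}" "\<lambda>r. u r y"] by simp
  have Y1: "u x1 y \<Longrightarrow> Y \<ge> 1"
  proof -
    assume "u x1 y"
    hence "x1 \<in> {r \<in> {x1..<x2}. u r y}" using assms by auto
    hence "{r \<in> {x1..<x2}. u r y} \<noteq> {}" by blast
    thus ?thesis unfolding Y_def by (simp add: Suc_le_eq card_gt_0_iff)
  qed
  have Y2: "\<not> u x1 y \<Longrightarrow> Y \<le> x2 - x1 - 1"
  proof -
    assume "\<not> u x1 y"
    hence "{r \<in> {x1..<x2}. u r y} \<subseteq> {x1<..<x2}" using le_neq_implies_less by fastforce
    hence "Y \<le> card {x1<..<x2}" unfolding Y_def by (intro card_mono) auto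
    thus ?thesis by simp
  qed
  show ?thesis unfolding Pc_def s V1_def[symmetric]
    using assms Yle Y1 Y2 by (cases "u x1 y"; cases "u x2 y") auto
qed

lemma Pc_le: "a \<le> x \<Longrightarrow> x < y \<Longrightarrow> Pc u a y x \<le> y - a - 1"
proof -
  assume h: "a \<le> x" "x < y"
  have "card {r \<in> {a..<x}. u r y} \<le> x - a" using card_filter_le[of "{a..<x}" "\<lambda>r. u r y"] by simp
  thus ?thesis unfolding Pc_def using h by auto
qed

lemma col_bij:
  assumes "a < y"
  shows "bij_betw (\<lambda>x. Pc u a y x) {a..<y} {0..y-a-1}"
proof -
  have inj: "inj_on (\<lambda>x. Pc u a y x) {a..<y}"
  proof (rule inj_onI)
    fix x z assume "x \<in> {a..<y}" "z \<in> {a..<y}" "Pc u a y x = Pc u a y z"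
    thus "x = z" using col_inj[of a x z y u] col_inj[of a z x y u]
      by (cases x z rule: linorder_cases) auto
  qed
  have sub: "(\<lambda>x. Pc u a y x) ` {a..<y} \<subseteq> {0..y-a-1}" using Pc_le by auto
  have "card ((\<lambda>x. Pc u a y x) ` {a..<y}) = card {0..y-a-1}"
    using card_image[OF inj] assms by simp
  hence "(\<lambda>x. Pc u a y x) ` {a..<y} = {0..y-a-1}"
    using sub by (intro card_subset_eq) auto
  thus ?thesis using inj by (simp add: bij_betw_def)
qed

lemma Lf_col: "Lf u a b x y = Pc u a y x + card {r \<in> {y<..b}. u x r}"
  by (simp add: Lf_def Pc_def)

lemma Lf_le: "a \<le> i \<Longrightarrow> i < j \<Longrightarrow> j \<le> b \<Longrightarrow> Lf u a b i j \<le> b - a - 1"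
proof -
  assume h: "a \<le> i" "i < j" "j \<le> b"
  have "card {r \<in> {j<..b}. u i r} \<le> b - j" using card_filter_le[of "{j<..b}" "u i"] by simp
  thus ?thesis unfolding Lf_col using h Pc_le[of a i j u] by auto
qed

lemma Lf_shift:
  assumes "a < i" "i < j"
  shows "Lf u a b i j = Lf u (Suc a) b i j + (if u a j then 1 else 0)"
proof -
  have "{r \<in> {a..<i}. u r j} = (if u a j then insert a {r \<in> {Suc a..<i}. u r j} else {r \<in> {Suc a..<i}. u r j})"
  proof -
    have "{a..<i} = insert a {Suc a..<i}" using assms by auto
    thus ?thesis by auto
  qed
  thus ?thesis unfolding Lf_def by auto
qed

lemma tri_sum: "2 * (\<Sum>v\<in>{0..k}. (k+1) - v) = (k+1)*(k+2::nat)"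
proof (induction k)
  case 0 then show ?case by simp
next
  case (Suc k)
  have "(\<Sum>v\<in>{0..Suc k}. (Suc k + 1) - v) = (\<Sum>v\<in>{0..k}. (Suc k + 1) - v) + 1"
    by simp
  also have "(\<Sum>v\<in>{0..k}. (Suc k + 1) - v) = (\<Sum>v\<in>{0..k}. ((k + 1) - v) + 1)"
    by (intro sum.cong) auto
  also have "\<dots> = (\<Sum>v\<in>{0..k}. (k + 1) - v) + (k+1)"
    unfolding sum.distrib by simp
  finally show ?case using Suc by (simp add: algebra_simps)
qed

lemma row_sum:
  assumes "2*k+4 \<le> b+1-a"
  shows "(k+1)*(k+2) \<le> (\<Sum>j\<in>{a<..b}. (k+1) - kf u a b a j)"
proof -
  define M where "M = b - a - 1"
  define g where "g v = (k+1) - min v (M - v)" for v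
  have ab: "a < b" using assms by simp
  have kM: "2*k + 2 \<le> M" using assms unfolding M_def by simp
  have "(\<Sum>j\<in>{a<..b}. (k+1) - kf u a b a j) = (\<Sum>j\<in>{a<..b}. g (Lf u a b a j))"
    unfolding g_def kf_def M_def by simp
  also have "\<dots> = (\<Sum>v\<in>{0..M}. g v)"
    using sum.reindex_bij_betw[OF row_bij[OF ab, of u], of g] unfolding M_def by simp
  finally have eq: "(\<Sum>j\<in>{a<..b}. (k+1) - kf u a b a j) = (\<Sum>v\<in>{0..M}. g v)" .
  define A where "A = {0..k}"
  define B where "B = (\<lambda>v. M - v) ` {0..k}"
  have dis: "A \<inter> B = {}" unfolding A_def B_def using kM by auto
  have sub: "A \<union> B \<subseteq> {0..M}" unfolding A_def B_def using kM by auto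
  have "(\<Sum>v\<in>A \<union> B. g v) \<le> (\<Sum>v\<in>{0..M}. g v)"
    using sub by (intro sum_mono2) auto
  moreover have "(\<Sum>v\<in>A \<union> B. g v) = (\<Sum>v\<in>A. g v) + (\<Sum>v\<in>B. g v)"
    using dis unfolding A_def B_def by (intro sum.union_disjoint) auto
  moreover have "(\<Sum>v\<in>B. g v) = (\<Sum>v\<in>{0..k}. g (M - v))"
    unfolding B_def using kM by (intro sum.reindex_cong[of "\<lambda>v. M - v"]) (auto simp: inj_on_def)
  moreover have "(\<Sum>v\<in>{0..k}. (k+1) - v) \<le> (\<Sum>v\<in>A. g v)"
    unfolding A_def g_def by (intro sum_mono) auto
  moreover have "(\<Sum>v\<in>{0..k}. (k+1) - v) \<le> (\<Sum>v\<in>{0..k}. g (M - v))"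
    unfolding g_def using kM by (intro sum_mono) auto
  ultimately show ?thesis using eq tri_sum[of k] by linarith
qed

lemma bij_preimage_card:
  assumes "bij_betw f A B" "V \<subseteq> B"
  shows "card {x \<in> A. f x \<in> V} = card V"
proof -
  have "f ` {x \<in> A. f x \<in> V} = V"
    using assms unfolding bij_betw_def by auto
  moreover have "inj_on f {x \<in> A. f x \<in> V}"
    using assms unfolding bij_betw_def by (auto intro: inj_on_subset)
  ultimately show ?thesis using card_image by fastforce
qed

definition Vc :: "book_drawing \<Rightarrow> nat \<Rightarrow> nat \<Rightarrow> nat \<Rightarrow> nat \<Rightarrow> nat set" where
  "Vc u a b k c = (if u a (b-c) then {b-a-2-k..b-a-2-c} else {0..k-c})"

lemma gain_member:
  assumes "2*k+4 \<le> b+1-a" "c \<le> k" "Suc a \<le> x" "x < b-c"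
    and "Pc u (Suc a) (b-c) x \<in> Vc u a b k c"
  shows "kf u a b x (b-c) = kf u (Suc a) b x (b-c) \<and> kf u (Suc a) b x (b-c) \<le> k"
proof -
  define y where "y = b - c"
  define P where "P = Pc u (Suc a) y x"
  define B where "B = card {r \<in> {y<..b}. u x r}"
  define L' where "L' = Lf u (Suc a) b x y"
  have B: "B \<le> c" unfolding B_def y_def using card_filter_le[of "{b-c<..b}" "u x"] by simp
  have L': "L' = P + B" unfolding L'_def P_def B_def by (rule Lf_col)
  have Lle: "L' \<le> b - Suc a - 1" unfolding L'_def using assms Lf_le[of "Suc a" x y b u]
    unfolding y_def by simp
  have L: "Lf u a b x y = L' + (if u a y then 1 else 0)"
    unfolding L'_def using assms Lf_shift[of a x y u b] unfolding y_def by simp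
  have kf: "kf u a b x y = min (L' + (if u a y then 1 else 0)) (b - a - 1 - (L' + (if u a y then 1 else 0)))"
    unfolding kf_def L by simp
  have kf': "kf u (Suc a) b x y = min L' (b - Suc a - 1 - L')"
    unfolding kf_def L'_def by simp
  show ?thesis
  proof (cases "u a y")
    case True
    hence "P \<ge> b-a-2-k" using assms(5) unfolding Vc_def P_def y_def by auto
    thus ?thesis using True kf kf' L' Lle assms(1,2) unfolding y_def by auto
  next
    case False
    hence "P \<le> k - c" using assms(5) unfolding Vc_def P_def y_def by auto
    thus ?thesis using False kf kf' L' B Lle assms(1,2) unfolding y_def by auto
  qed
qed

definition gset :: "book_drawing \<Rightarrow> nat \<Rightarrow> nat \<Rightarrow> nat \<Rightarrow> (nat \<times> nat) set" where
  "gset u a b k = {(x,y). Suc a \<le> x \<and> x < y \<and> y \<le> b \<and> b - k \<le> y \<and>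
      kf u a b x y = kf u (Suc a) b x y \<and> kf u (Suc a) b x y \<le> k}"

lemma gset_finite: "finite (gset u a b k)"
  by (rule finite_subset[of _ "{0..b} \<times> {0..b}"]) (auto simp: gset_def)

lemma gain_card:
  assumes "2*k+4 \<le> b+1-a"
  shows "(k+1)*(k+2) \<le> 2 * card (gset u a b k)"
proof -
  define G where "G c = (\<lambda>x. (x, b-c)) ` {x \<in> {Suc a..<b-c}. Pc u (Suc a) (b-c) x \<in> Vc u a b k c}" for c
  have cardG: "card (G c) = k + 1 - c" if "c \<le> k" for c
  proof -
    have "card (G c) = card {x \<in> {Suc a..<b-c}. Pc u (Suc a) (b-c) x \<in> Vc u a b k c}"
      unfolding G_def by (intro card_image) (auto simp: inj_on_def)
    also have "\<dots> = card (Vc u a b k c)"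
      using that assms
      by (intro bij_preimage_card[OF col_bij]) (auto simp: Vc_def)
    also have "\<dots> = k + 1 - c" using that assms by (auto simp: Vc_def)
    finally show ?thesis .
  qed
  have Gsub: "(\<Union>c\<in>{0..k}. G c) \<subseteq> gset u a b k"
  proof
    fix e assume "e \<in> (\<Union>c\<in>{0..k}. G c)"
    then obtain c x where c: "c \<le> k" and e: "e = (x, b-c)" and x: "Suc a \<le> x" "x < b-c"
      and P: "Pc u (Suc a) (b-c) x \<in> Vc u a b k c"
      unfolding G_def by auto
    show "e \<in> gset u a b k"
      using gain_member[OF assms c x P] c x assms unfolding e gset_def by auto
  qed
  have "card (\<Union>c\<in>{0..k}. G c) = (\<Sum>c\<in>{0..k}. card (G c))"
    by (intro card_UN_disjoint) (auto simp: G_def)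
  also have "\<dots> = (\<Sum>c\<in>{0..k}. k + 1 - c)" by (intro sum.cong) (auto simp: cardG)
  finally have "card (\<Union>c\<in>{0..k}. G c) = (\<Sum>c\<in>{0..k}. k + 1 - c)" .
  moreover have "card (\<Union>c\<in>{0..k}. G c) \<le> card (gset u a b k)"
    using Gsub gset_finite by (intro card_mono)
  ultimately show ?thesis using tri_sum[of k] by simp
qed

definition Rg :: "nat \<Rightarrow> nat \<Rightarrow> nat \<Rightarrow> (nat \<times> nat) set" where
  "Rg a b k = {(i,j). a \<le> i \<and> i < j \<and> j \<le> b \<and> (i \<le> a+k \<or> b-k \<le> j)}"

lemma Rg_finite: "finite (Rg a b k)"
  by (rule finite_subset[of _ "{0..b} \<times> {0..b}"]) (auto simp: Rg_def)

lemma kf_shift_le: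
  assumes "a < i" "i < j" "j \<le> b"
  shows "kf u a b i j \<le> kf u (Suc a) b i j + 1"
proof -
  have L: "Lf u a b i j = Lf u (Suc a) b i j + (if u a j then 1 else 0)"
    using Lf_shift[OF assms(1,2)] by simp
  have "Lf u (Suc a) b i j \<le> b - Suc a - 1" using assms by (intro Lf_le) auto
  thus ?thesis unfolding kf_def L by auto
qed

definition rest where "rest a b k = {(i,j) \<in> Rg a b k. Suc a \<le> i}"

lemma rest_finite: "finite (rest a b k)"
  by (rule finite_subset[OF _ Rg_finite[of a b k]]) (auto simp: rest_def)

lemma step:
  assumes "2*k+4 \<le> b+1-a"
  shows "2*(k+1)*(k+2) + (k+1)*(k+2) + 2 * (\<Sum>(i,j)\<in>rest a b k. k - kf u (Suc a) b i j)
         \<le> 2*(\<Sum>(i,j)\<in>Rg a b k. (k+1) - kf u a b i j)"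
proof -
  define f where "f i j = (k+1) - kf u a b i j" for i j
  define row where "row = (\<lambda>j. (a,j)) ` {a<..b}"
  have RU: "Rg a b k = row \<union> rest a b k" unfolding row_def rest_def Rg_def by auto
  have dis: "row \<inter> rest a b k = {}" unfolding row_def rest_def by auto
  have fin: "finite (rest a b k)" "finite row"
    using rest_finite unfolding row_def by auto
  have sR: "(\<Sum>(i,j)\<in>Rg a b k. f i j) = (\<Sum>(i,j)\<in>row. f i j) + (\<Sum>(i,j)\<in>rest a b k. f i j)"
    unfolding RU using dis fin by (intro sum.union_disjoint) auto
  have srow: "(\<Sum>(i,j)\<in>row. f i j) = (\<Sum>j\<in>{a<..b}. f a j)"
    unfolding row_def by (subst sum.reindex) (auto simp: inj_on_def)
  have r1: "(k+1)*(k+2) \<le> (\<Sum>j\<in>{a<..b}. f a j)" unfolding f_def using row_sum[OF assms] .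
  have gsub: "gset u a b k \<subseteq> rest a b k" unfolding gset_def rest_def Rg_def by auto
  have pe: "(k - kf u (Suc a) b i j) + (if (i,j) \<in> gset u a b k then 1 else 0) \<le> f i j"
    if "(i,j) \<in> rest a b k" for i j
  proof -
    have h: "a < i" "i < j" "j \<le> b" using that unfolding rest_def Rg_def by auto
    show ?thesis
    proof (cases "(i,j) \<in> gset u a b k")
      case True thus ?thesis unfolding f_def gset_def by auto
    next
      case False thus ?thesis unfolding f_def using kf_shift_le[OF h, of u] by auto
    qed
  qed
  have "(\<Sum>(i,j)\<in>rest a b k. (k - kf u (Suc a) b i j) + (if (i,j) \<in> gset u a b k then 1 else 0))
        \<le> (\<Sum>(i,j)\<in>rest a b k. f i j)"
    using pe by (intro sum_mono) auto
  moreover have "(\<Sum>(i,j)\<in>rest a b k. (k - kf u (Suc a) b i j) + (if (i,j) \<in> gset u a b k then 1 else 0))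
     = (\<Sum>(i,j)\<in>rest a b k. k - kf u (Suc a) b i j) + card (gset u a b k)"
  proof -
    have "(\<Sum>(i,j)\<in>rest a b k. (k - kf u (Suc a) b i j) + (if (i,j) \<in> gset u a b k then 1 else 0))
      = (\<Sum>(i,j)\<in>rest a b k. k - kf u (Suc a) b i j) + (\<Sum>e\<in>rest a b k. if e \<in> gset u a b k then 1 else 0)"
      by (simp add: sum.distrib split_def)
    also have "(\<Sum>e\<in>rest a b k. if e \<in> gset u a b k then 1 else (0::nat)) = card (gset u a b k)"
      using gsub fin by (simp add: sum.If_cases Int_absorb1)
    finally show ?thesis .
  qed
  ultimately have "(\<Sum>(i,j)\<in>rest a b k. k - kf u (Suc a) b i j) + card (gset u a b k)
     \<le> (\<Sum>(i,j)\<in>rest a b k. f i j)" by simp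
  thus ?thesis using sR srow r1 gain_card[OF assms, of u] unfolding f_def by simp
qed

theorem region_bound:
  "2*k+4 \<le> b+1-a \<Longrightarrow> (k+1)*(k+2)*(k+3) \<le> 2*(\<Sum>(i,j)\<in>Rg a b k. (k+1) - kf u a b i j)"
proof (induction k arbitrary: a)
  case 0
  from step[OF 0] show ?case by simp
next
  case (Suc k)
  have IH: "(k+1)*(k+2)*(k+3) \<le> 2*(\<Sum>(i,j)\<in>Rg (Suc a) b k. (k+1) - kf u (Suc a) b i j)"
    using Suc.prems by (intro Suc.IH) simp
  have sub: "Rg (Suc a) b k \<subseteq> rest a b (Suc k)" unfolding Rg_def rest_def by auto
  have "(\<Sum>(i,j)\<in>Rg (Suc a) b k. (k+1) - kf u (Suc a) b i j)
        \<le> (\<Sum>(i,j)\<in>rest a b (Suc k). (k+1) - kf u (Suc a) b i j)"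
    using sub rest_finite[of a b "Suc k"]
    by (intro sum_mono2) auto
  thus ?case using step[OF Suc.prems, of u] IH by (simp add: algebra_simps)
qed

definition lc :: "book_drawing \<Rightarrow> nat \<Rightarrow> nat \<Rightarrow> nat \<Rightarrow> bool" where
  "lc u i j r = (if r < i then u r j else if r < j then \<not> u i j else u i r)"

lemma left_char:
  assumes "i < j" "r \<noteq> i" "r \<noteq> j"
  shows "left_of u i j r = lc u i j r"
proof -
  consider "r < i" | "i < r \<and> r < j" | "j < r" using assms by linarith
  thus ?thesis
  proof cases
    case 1 thus ?thesis using assms
      by (simp add: left_of_def ccw_def lc_def Let_def min_def max_def)
  next
    case 2 thus ?thesis using assms
      by (simp add: left_of_def ccw_def lc_def Let_def min_def max_def)
  next
    case 3 thus ?thesis using assms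
      by (simp add: left_of_def ccw_def lc_def Let_def min_def max_def)
  qed
qed

definition lefts where "lefts u n i j = {r \<in> {1..n} - {i,j}. left_of u i j r}"
definition rights where "rights u n i j = {r \<in> {1..n} - {i,j}. right_of u i j r}"

lemma card_lefts:
  assumes "1 \<le> i" "i < j" "j \<le> n"
  shows "card (lefts u n i j) = Lf u 1 n i j"
proof -
  define A where "A = {r \<in> {1..<i}. u r j}"
  define B where "B = (if u i j then {} else {i<..<j})"
  define C where "C = {r \<in> {j<..n}. u i r}"
  have eq: "lefts u n i j = A \<union> B \<union> C"
  proof -
    have "lefts u n i j = {r \<in> {1..n} - {i,j}. lc u i j r}"
      unfolding lefts_def using assms left_char[of i j] by auto
    also have "\<dots> = A \<union> B \<union> C"
      unfolding A_def B_def C_def lc_def using assms by auto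
    finally show ?thesis .
  qed
  have "card (A \<union> B \<union> C) = card A + card B + card C"
  proof -
    have d1: "A \<inter> B = {}" "(A \<union> B) \<inter> C = {}" unfolding A_def B_def C_def using assms by auto
    have f: "finite A" "finite B" "finite C" unfolding A_def B_def C_def by auto
    show ?thesis using d1 f by (simp add: card_Un_disjoint)
  qed
  moreover have "card B = (if u i j then 0 else j - i - 1)" unfolding B_def by simp
  ultimately show ?thesis unfolding eq Lf_def A_def C_def by simp
qed

lemma card_rights:
  assumes "1 \<le> i" "i < j" "j \<le> n"
  shows "card (rights u n i j) = n - 2 - Lf u 1 n i j"
proof -
  have U: "rights u n i j = ({1..n} - {i,j}) - lefts u n i j"
    unfolding rights_def lefts_def right_of_def left_of_def by auto
  have "card ({1..n} - {i,j}) = n - 2" using assms by (simp add: card_Diff_subset)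
  moreover have "lefts u n i j \<subseteq> {1..n} - {i,j}" unfolding lefts_def by auto
  ultimately show ?thesis unfolding U using card_lefts[OF assms, of u]
    by (simp add: card_Diff_subset finite_subset)
qed

lemma le_k_edge_iff:
  assumes "1 \<le> i" "i < j" "j \<le> n"
  shows "le_k_edge n u k i j \<longleftrightarrow> kf u 1 n i j \<le> k"
proof -
  have l: "card {r \<in> {1..n} - {i, j}. left_of u i j r} = Lf u 1 n i j"
    using card_lefts[OF assms] unfolding lefts_def .
  have r: "card {r \<in> {1..n} - {i, j}. right_of u i j r} = n - 2 - Lf u 1 n i j"
    using card_rights[OF assms] unfolding rights_def .
  show ?thesis unfolding le_k_edge_def k_edge_def l r kf_def by auto
qed

definition EE :: "nat \<Rightarrow> (nat \<times> nat) set" where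
  "EE n = {(i,j). 1 \<le> i \<and> i < j \<and> j \<le> n}"

definition SS where
  "SS u n = Sigma (EE n) (\<lambda>(i,j). lefts u n i j \<times> rights u n i j)"

definition CC where
  "CC u n = {(i, k, j, l). 1 \<le> i \<and> i < k \<and> k < j \<and> j < l \<and> l \<le> n \<and> u i j = u k l}"

lemma EE_finite: "finite (EE n)"
  by (rule finite_subset[of _ "{0..n} \<times> {0..n}"]) (auto simp: EE_def)

lemma card_SS: "card (SS u n) = (\<Sum>(i,j)\<in>EE n. card (lefts u n i j) * card (rights u n i j))"
  unfolding SS_def
  by (subst card_SigmaI) (auto simp: EE_finite lefts_def rights_def card_cartesian_product split_def)

lemma four_sorted:
  fixes X :: "nat set"
  assumes "card X = 4"
  shows "\<exists>a b c d. a < b \<and> b < c \<and> c < d \<and> X = {a,b,c,d}"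
proof -
  have fin: "finite X" using assms by (metis card.infinite zero_neq_numeral)
  define xs where "xs = sorted_list_of_set X"
  have len: "length xs = 4" unfolding xs_def using assms by simp
  have sw: "sorted_wrt (<) xs" unfolding xs_def by simp
  have st: "set xs = X" unfolding xs_def using fin by simp
  obtain a b c d where "xs = [a,b,c,d]" using len
    by (cases xs; simp; rename_tac l; case_tac l; simp; rename_tac l; case_tac l; simp;
        rename_tac l; case_tac l; simp)
  thus ?thesis using sw st by auto
qed

definition cands :: "nat \<Rightarrow> nat \<Rightarrow> nat \<Rightarrow> nat \<Rightarrow> ((nat \<times> nat) \<times> (nat \<times> nat)) list" where
  "cands a b c d = [((a,b),(c,d)), ((a,b),(d,c)), ((a,c),(b,d)), ((a,c),(d,b)), ((a,d),(b,c)), ((a,d),(c,b)),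
     ((b,c),(a,d)), ((b,c),(d,a)), ((b,d),(a,c)), ((b,d),(c,a)), ((c,d),(a,b)), ((c,d),(b,a))]"

lemma perm_cases:
  fixes a b c d i j r s :: nat
  assumes "a < b" "b < c" "c < d" "{i,j,r,s} = {a,b,c,d}" "i < j" "r \<noteq> i" "r \<noteq> j" "s \<noteq> i" "s \<noteq> j" "r \<noteq> s"
  shows "((i,j),(r,s)) \<in> set (cands a b c d)"
proof -
  have "i \<in> {i,j,r,s}" "j \<in> {i,j,r,s}" by simp_all
  hence X: "i = a \<or> i = b \<or> i = c \<or> i = d" "j = a \<or> j = b \<or> j = c \<or> j = d" unfolding assms(4) by simp_all
  have ij: "(i,j) = (a,b) \<or> (i,j) = (a,c) \<or> (i,j) = (a,d) \<or> (i,j) = (b,c) \<or> (i,j) = (b,d) \<or> (i,j) = (c,d)"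
    using X assms(1-3,5) by (elim disjE) simp_all
  have cov: "{r,s} = {a,b,c,d} - {i,j}" using assms(4,6-9) by blast
  have rs: "\<And>x y. {r,s} = {x,y} \<Longrightarrow> (r = x \<and> s = y) \<or> (r = y \<and> s = x)"
    using assms(10) by (auto simp: doubleton_eq_iff)
  have cands: "set (cands a b c d) = {((a,b),(c,d)), ((a,b),(d,c)), ((a,c),(b,d)), ((a,c),(d,b)), ((a,d),(b,c)), ((a,d),(c,b)),
     ((b,c),(a,d)), ((b,c),(d,a)), ((b,d),(a,c)), ((b,d),(c,a)), ((c,d),(a,b)), ((c,d),(b,a))}"
    unfolding cands_def by simp
  from ij show ?thesis
  proof (elim disjE)
    assume h: "(i,j) = (a,b)"
    hence "{a,b,c,d} - {i,j} = {c,d}" using assms(1-3) by auto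
    hence "(r = c \<and> s = d) \<or> (r = d \<and> s = c)" using cov rs by simp
    thus ?thesis using h unfolding cands by auto
  next
    assume h: "(i,j) = (a,c)"
    hence "{a,b,c,d} - {i,j} = {b,d}" using assms(1-3) by auto
    hence "(r = b \<and> s = d) \<or> (r = d \<and> s = b)" using cov rs by simp
    thus ?thesis using h unfolding cands by auto
  next
    assume h: "(i,j) = (a,d)"
    hence "{a,b,c,d} - {i,j} = {b,c}" using assms(1-3) by auto
    hence "(r = b \<and> s = c) \<or> (r = c \<and> s = b)" using cov rs by simp
    thus ?thesis using h unfolding cands by auto
  next
    assume h: "(i,j) = (b,c)"
    hence "{a,b,c,d} - {i,j} = {a,d}" using assms(1-3) by auto
    hence "(r = a \<and> s = d) \<or> (r = d \<and> s = a)" using cov rs by simp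
    thus ?thesis using h unfolding cands by auto
  next
    assume h: "(i,j) = (b,d)"
    hence "{a,b,c,d} - {i,j} = {a,c}" using assms(1-3) by auto
    hence "(r = a \<and> s = c) \<or> (r = c \<and> s = a)" using cov rs by simp
    thus ?thesis using h unfolding cands by auto
  next
    assume h: "(i,j) = (c,d)"
    hence "{a,b,c,d} - {i,j} = {a,b}" using assms(1-3) by auto
    hence "(r = a \<and> s = b) \<or> (r = b \<and> s = a)" using cov rs by simp
    thus ?thesis using h unfolding cands by auto
  qed
qed

lemma SS_mem:
  "((i,j),(r,s)) \<in> SS u n \<longleftrightarrow> 1 \<le> i \<and> i < j \<and> j \<le> n \<and> 1 \<le> r \<and> r \<le> n \<and> r \<noteq> i \<and> r \<noteq> j \<and> lc u i j r
      \<and> 1 \<le> s \<and> s \<le> n \<and> s \<noteq> i \<and> s \<noteq> j \<and> \<not> lc u i j s"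
  unfolding SS_def EE_def lefts_def rights_def right_of_def left_of_def[symmetric]
  by (auto simp: left_char)

definition phi :: "(nat \<times> nat) \<times> (nat \<times> nat) \<Rightarrow> nat set" where
  "phi t = (case t of ((i,j),(r,s)) \<Rightarrow> {i,j,r,s})"

lemma fS_eq:
  assumes "a < b" "b < c" "c < d"
  shows "{t \<in> SS u n. phi t = {a,b,c,d}} = {t \<in> set (cands a b c d). t \<in> SS u n}"
proof
  show "{t \<in> SS u n. phi t = {a,b,c,d}} \<subseteq> {t \<in> set (cands a b c d). t \<in> SS u n}"
  proof clarify
    fix i j r s assume h: "((i,j),(r,s)) \<in> SS u n" "phi ((i,j),(r,s)) = {a,b,c,d}"
    have "r \<noteq> s" "i < j" "r \<noteq> i" "r \<noteq> j" "s \<noteq> i" "s \<noteq> j" using h(1) unfolding SS_mem by auto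
    thus "((i,j),(r,s)) \<in> set (cands a b c d)"
      using perm_cases[OF assms] h(2) unfolding phi_def by auto
  qed
next
  show "{t \<in> set (cands a b c d). t \<in> SS u n} \<subseteq> {t \<in> SS u n. phi t = {a,b,c,d}}"
    unfolding cands_def phi_def by auto
qed

lemma card_filter_list:
  "distinct xs \<Longrightarrow> card {t \<in> set xs. P t} = length (filter P xs)"
proof -
  assume "distinct xs"
  moreover have "{t \<in> set xs. P t} = set (filter P xs)" by auto
  ultimately show ?thesis using distinct_card[of "filter P xs"] by simp
qed

lemma fS_card:
  assumes "1 \<le> a" "a < b" "b < c" "c < d" "d \<le> n"
  shows "card {t \<in> SS u n. phi t = {a,b,c,d}} + (if u a c = u b d then 1 else 0) = 3"
proof -
  have dist: "distinct (cands a b c d)" using assms unfolding cands_def by auto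
  have eq: "card {t \<in> SS u n. phi t = {a,b,c,d}} = length (filter (\<lambda>t. t \<in> SS u n) (cands a b c d))"
    unfolding fS_eq[OF assms(2-4)] by (rule card_filter_list[OF dist])
  have o: "a < c" "a < d" "b < d" "1 \<le> b" "1 \<le> c" "1 \<le> d" "a \<le> n" "b \<le> n" "c \<le> n"
    using assms by auto
  show ?thesis unfolding eq
    using assms o
    by (cases "u a c"; cases "u a d"; cases "u b d") (simp_all add: cands_def SS_mem lc_def)
qed

definition psi :: "nat \<times> nat \<times> nat \<times> nat \<Rightarrow> nat set" where
  "psi t = (case t of (i,k,j,l) \<Rightarrow> {i,k,j,l})"

lemma sorted4_unique:
  fixes a b c d i k j l :: nat
  assumes "a < b" "b < c" "c < d" "i < k" "k < j" "j < l" "{i,k,j,l} = {a,b,c,d}"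
  shows "i = a \<and> k = b \<and> j = c \<and> l = d"
proof -
  have fin: "finite {a,b,c,d}" by simp
  have c1: "card {a,b,c,d} = 4" using assms by auto
  have l1: "sorted_list_of_set {a,b,c,d} = [a,b,c,d]"
    using sorted_list_of_set_unique[OF fin, of "[a,b,c,d]"] assms c1 by auto
  have l2: "sorted_list_of_set {a,b,c,d} = [i,k,j,l]"
    using sorted_list_of_set_unique[OF fin, of "[i,k,j,l]"] assms c1 by auto
  show ?thesis using l1 l2 by simp
qed

lemma fC_eq:
  assumes "1 \<le> a" "a < b" "b < c" "c < d" "d \<le> n"
  shows "card {t \<in> CC u n. psi t = {a,b,c,d}} = (if u a c = u b d then 1 else 0)"
proof -
  have sub: "{t \<in> CC u n. psi t = {a,b,c,d}} \<subseteq> {(a,b,c,d)}"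
  proof
    fix t assume "t \<in> {t \<in> CC u n. psi t = {a,b,c,d}}"
    then obtain i k j l where t: "t = (i,k,j,l)" "i < k" "k < j" "j < l" "{i,k,j,l} = {a,b,c,d}"
      unfolding CC_def psi_def by auto
    thus "t \<in> {(a,b,c,d)}" using sorted4_unique[OF assms(2-4) t(2-5)] by simp
  qed
  have mem: "(a,b,c,d) \<in> {t \<in> CC u n. psi t = {a,b,c,d}} \<longleftrightarrow> u a c = u b d"
    using assms unfolding CC_def psi_def by auto
  show ?thesis
  proof (cases "u a c = u b d")
    case True
    have e: "{t \<in> CC u n. psi t = {a,b,c,d}} = {(a,b,c,d)}" using sub mem True by blast
    show ?thesis unfolding e using True by simp
  next
    case False
    have e: "{t \<in> CC u n. psi t = {a,b,c,d}} = {}" using sub mem False by blast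
    show ?thesis unfolding e using False by simp
  qed
qed

definition Q4 :: "nat \<Rightarrow> nat set set" where "Q4 n = {X. X \<subseteq> {1..n} \<and> card X = 4}"

lemma Q4_finite: "finite (Q4 n)"
  unfolding Q4_def by (rule finite_subset[of _ "Pow {1..n}"]) auto

lemma card_Q4: "card (Q4 n) = n choose 4"
  unfolding Q4_def using n_subsets[of "{1..n}" 4] by simp

lemma SS_finite: "finite (SS u n)"
proof -
  have "SS u n \<subseteq> ({0..n}\<times>{0..n}) \<times> ({0..n}\<times>{0..n})"
    by (auto simp: SS_def EE_def lefts_def rights_def)
  thus ?thesis by (rule finite_subset) auto
qed

lemma CC_finite: "finite (CC u (n::nat))"
proof -
  have "CC u n \<subseteq> {0..n}\<times>{0..n}\<times>{0..n}\<times>{0..n}"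
    by (auto simp: CC_def)
  thus ?thesis by (rule finite_subset) auto
qed

lemma card4: "distinct [i,j,r,s::nat] \<Longrightarrow> card {i,j,r,s} = 4"
  by simp

lemma card_fibers:
  assumes fin: "finite A" and inQ: "\<And>t. t \<in> A \<Longrightarrow> f t \<in> Q4 n"
  shows "card A = (\<Sum>X\<in>Q4 n. card {t \<in> A. f t = X})"
proof -
  have "A = (\<Union>X\<in>Q4 n. {t \<in> A. f t = X})" using inQ by auto
  hence "card A = card (\<Union>X\<in>Q4 n. {t \<in> A. f t = X})" by simp
  also have "\<dots> = (\<Sum>X\<in>Q4 n. card {t \<in> A. f t = X})"
    using fin by (intro card_UN_disjoint Q4_finite) auto
  finally show ?thesis .
qed

lemma cross_identity: "card (SS u n) + card (CC u n) = 3 * (n choose 4)"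
proof -
  have sS: "card (SS u n) = (\<Sum>X\<in>Q4 n. card {t \<in> SS u n. phi t = X})"
  proof (rule card_fibers[OF SS_finite])
    fix t assume "t \<in> SS u n"
    then obtain i j r s where t: "t = ((i,j),(r,s))" and h: "((i,j),(r,s)) \<in> SS u n" by (cases t) auto
    have "distinct [i,j,r,s]" using h unfolding SS_mem by auto
    thus "phi t \<in> Q4 n" using h unfolding t phi_def Q4_def SS_mem by auto
  qed
  have sC: "card (CC u n) = (\<Sum>X\<in>Q4 n. card {t \<in> CC u n. psi t = X})"
  proof (rule card_fibers[OF CC_finite])
    fix t assume "t \<in> CC u n"
    then obtain i k j l where t: "t = (i,k,j,l)" and h: "1 \<le> i" "i < k" "k < j" "j < l" "l \<le> n"
      unfolding CC_def by auto
    have "distinct [i,k,j,l]" using h by auto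
    thus "psi t \<in> Q4 n" using h unfolding t psi_def Q4_def by auto
  qed
  have each: "card {t \<in> SS u n. phi t = X} + card {t \<in> CC u n. psi t = X} = 3" if "X \<in> Q4 n" for X
  proof -
    have "card X = 4" using that unfolding Q4_def by auto
    from four_sorted[OF this] obtain a b c d where abcd: "a < b" "b < c" "c < d" "X = {a,b,c,d}"
      by blast
    have "1 \<le> a" "d \<le> n" using that abcd unfolding Q4_def by auto
    thus ?thesis using fS_card[of a b c d n u] fC_eq[of a b c d n u] abcd by simp
  qed
  have "card (SS u n) + card (CC u n) = (\<Sum>X\<in>Q4 n. card {t \<in> SS u n. phi t = X} + card {t \<in> CC u n. psi t = X})"
    unfolding sS sC by (simp add: sum.distrib)
  also have "\<dots> = (\<Sum>X\<in>Q4 n. 3)" by (intro sum.cong) (auto simp: each)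
  also have "\<dots> = 3 * (n choose 4)" by (simp add: card_Q4)
  finally show ?thesis .
qed

lemma crossings_CC: "crossings n u = card (CC u n)"
  unfolding crossings_def CC_def ..

lemma choose4_real: "real (n choose 4) = real n * (real n - 1) * (real n - 2) * (real n - 3) / 24"
  by (simp add: binomial_gbinomial gbinomial_altdef_of_nat eval_nat_numeral prod.atLeast0_lessThan_Suc)

lemma card_EE: "2 * card (EE n) = n * (n - 1)"
proof (induction n)
  case 0
  have "EE 0 = {}" by (auto simp: EE_def)
  thus ?case by simp
next
  case (Suc n)
  have e: "EE (Suc n) = EE n \<union> (\<lambda>i. (i, Suc n)) ` {1..n}" unfolding EE_def by auto
  have "card (EE (Suc n)) = card (EE n) + card ((\<lambda>i. (i, Suc n)) ` {1..n})"
    unfolding e by (intro card_Un_disjoint EE_finite) (auto simp: EE_def)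
  also have "card ((\<lambda>i. (i, Suc n)) ` {1..n}) = n" by (subst card_image) (auto simp: inj_on_def)
  finally show ?case using Suc by (cases n) (auto simp: algebra_simps)
qed

lemma sum_T: "4 * (\<Sum>t<m. (t+1)*(t+2)*(t+3)) = m*(m+1)*(m+2)*(m+(3::nat))"
  by (induction m) (auto simp: algebra_simps)

lemma sum_trunc: "2 * (\<Sum>t<m. (t+1) - x) = (m - x) * (m + 1 - (x::nat))"
proof (induction m)
  case 0 thus ?case by simp
next
  case (Suc m)
  show ?case
  proof (cases "x \<le> m")
    case True
    hence "(Suc m - x) * (Suc m + 1 - x) = (m - x) * (m + 1 - x) + 2 * (m + 1 - x)"
      by (simp add: Suc_diff_le algebra_simps)
    thus ?thesis using Suc by simp
  next
    case False thus ?thesis using Suc by simp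
  qed
qed

lemma edge_ident:
  fixes x K N :: nat
  assumes "x \<le> K" "2*K \<le> N" "N \<le> 2*K+1" "1 \<le> K"
  shows "x*(N-x) + 2*(\<Sum>t<K-1. (t+1) - x) + (N+1-2*K)*(K-x) = K*(N-K)"
proof -
  have s: "2*(\<Sum>t<K-1. (t+1) - x) = (K - 1 - x) * (K - x)"
    using sum_trunc[where m="K-1" and x=x] assms by simp
  show ?thesis
  proof (cases "x = K")
    case True thus ?thesis using s by simp
  next
    case False
    hence xK: "x < K" using assms by simp
    then obtain y where y: "K = x + Suc y" using less_imp_add_positive by (metis add_Suc_right less_iff_Suc_add add.commute)
    obtain e where e: "N = 2*K + e" "e \<le> 1" using assms by (metis le_add_diff_inverse add_le_cancel_left)
    have r: "N - x = x + 2*y + 2 + e" "K - 1 - x = y" "K - x = y + 1" "N+1-2*K = e+1" "N - K = x+y+1+e"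
      using y e by auto
    have "x*(N-x) + (K - 1 - x) * (K - x) + (N+1-2*K)*(K-x) = K*(N-K)"
      unfolding r unfolding y by (simp add: algebra_simps)
    thus ?thesis using s by simp
  qed
qed

definition Wt :: "book_drawing \<Rightarrow> nat \<Rightarrow> nat \<Rightarrow> nat" where
  "Wt u n t = (\<Sum>(p,q)\<in>EE n. (t+1) - kf u 1 n p q)"

lemma Rg_EE: "Rg 1 n t \<subseteq> EE n" by (auto simp: Rg_def EE_def)

lemma W_ge: "2*t+4 \<le> n \<Longrightarrow> (t+1)*(t+2)*(t+3) \<le> 2 * Wt u n t"
proof -
  assume h: "2*t+4 \<le> n"
  have "(t+1)*(t+2)*(t+3) \<le> 2*(\<Sum>(i,j)\<in>Rg 1 n t. (t+1) - kf u 1 n i j)"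
    using region_bound[of t n 1 u] h by simp
  also have "(\<Sum>(i,j)\<in>Rg 1 n t. (t+1) - kf u 1 n i j) \<le> Wt u n t"
    unfolding Wt_def by (intro sum_mono2 EE_finite Rg_EE) auto
  finally show ?thesis by simp
qed

lemma W_bad:
  assumes "2*k+4 \<le> n" "(i,j) \<in> EE n" "(i,j) \<notin> Rg 1 n k" "kf u 1 n i j \<le> k"
  shows "(k+1)*(k+2)*(k+3) + 2 \<le> 2 * Wt u n k"
proof -
  have "(k+1)*(k+2)*(k+3) \<le> 2*(\<Sum>(i,j)\<in>Rg 1 n k. (k+1) - kf u 1 n i j)"
    using region_bound[of k n 1 u] assms by simp
  moreover have "(\<Sum>(i,j)\<in>insert (i,j) (Rg 1 n k). (k+1) - kf u 1 n i j)
     = ((k+1) - kf u 1 n i j) + (\<Sum>(i,j)\<in>Rg 1 n k. (k+1) - kf u 1 n i j)"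
    using assms(3) Rg_finite by simp
  moreover have "(\<Sum>(i,j)\<in>insert (i,j) (Rg 1 n k). (k+1) - kf u 1 n i j) \<le> Wt u n k"
    unfolding Wt_def using assms(2) Rg_EE by (intro sum_mono2 EE_finite) auto
  ultimately show ?thesis using assms(4) by linarith
qed

lemma kf_prod:
  assumes "(p,q) \<in> EE n"
  shows "card (lefts u n p q) * card (rights u n p q) = kf u 1 n p q * (n - 2 - kf u 1 n p q)"
proof -
  have h: "1 \<le> p" "p < q" "q \<le> n" using assms unfolding EE_def by auto
  have le: "Lf u 1 n p q \<le> n - 2" using Lf_le[of 1 p q n u] h by simp
  show ?thesis unfolding card_lefts[OF h] card_rights[OF h] kf_def
    using le by (cases "Lf u 1 n p q \<le> n - 2 - Lf u 1 n p q") (auto simp: min_def mult.commute)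
qed

lemma kf_leK: "(p,q) \<in> EE n \<Longrightarrow> kf u 1 n p q \<le> (n-2) div 2"
  unfolding kf_def by (simp add: min_def) linarith

lemma key_ident:
  fixes n :: nat
  assumes "4 \<le> n"
  defines "K \<equiv> (n-2) div 2"
  defines "N \<equiv> n - 2"
  defines "c \<equiv> N + 1 - 2*K"
  shows "6 * real (n choose 4) - real n*(real n-1)*real K*real (N-K)
     + real (K-1)*real K*real (K+1)*real (K+2)/2 + real c*real K*real (K+1)*real (K+2) = 2 * Z n"
proof -
  obtain m where m: "n = 2*m \<or> n = 2*m+1" by (metis dvd_mult_div_cancel mult_div_mod_eq odd_two_times_div_two_succ)
  have m2: "m \<ge> 2" using m assms(1) by auto
  show ?thesis
  proof (cases "n = 2*m")
    case True
    have d: "n div 2 = m" "(n-1) div 2 = m-1" "(n-2) div 2 = m-1" "(n-3) div 2 = m-2"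
      using True m2 by auto
    have v: "K = m - 1" "N - K = m - 1" "c = 1" "K - 1 = m - 2"
      unfolding K_def N_def c_def d(3) using True m2 by linarith+
    have r: "real (m-1) = real m - 1" "real (m-2) = real m - 2" "real n = 2 * real m"
      "real (m-1+1) = real m" "real (m-1+2) = real m + 1"
      using m2 True by auto
    show ?thesis unfolding v(2) v(4) unfolding v(1) v(3) Z_def d choose4_real using r
      by (simp only: r of_nat_1 mult_1_left) (simp add: algebra_simps divide_simps)
  next
    case False
    hence n: "n = 2*m+1" using m by auto
    have d: "n div 2 = m" "(n-1) div 2 = m" "(n-2) div 2 = m-1" "(n-3) div 2 = m-1"
      using n m2 by auto
    have v: "K = m - 1" "N - K = m" "c = 2" "K - 1 = m - 2"
      unfolding K_def N_def c_def d(3) using n m2 by linarith+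
    have r: "real (m-1) = real m - 1" "real (m-2) = real m - 2" "real n = 2 * real m + 1"
      "real (m-1+1) = real m" "real (m-1+2) = real m + 1"
      using m2 n by auto
    show ?thesis unfolding v(2) v(4) unfolding v(1) v(3) Z_def d choose4_real using r
      by (simp only: r of_nat_1 mult_1_left) (simp add: algebra_simps divide_simps)
  qed
qed

theorem lemma15:
  fixes n k :: nat and upper :: book_drawing
  assumes "normalized n upper"
    and "crossing_optimal n upper"
    and "k + 2 \<le> n div 2"
    and "1 \<le> i" and "i < j" and "j \<le> n"
    and "le_k_edge n upper k i j"
  shows "i \<le> k + 1 \<or> n - k \<le> j"
proof (rule ccontr)
  assume nb: "\<not> (i \<le> k + 1 \<or> n - k \<le> j)"
  define u where "u = upper"
  define N where "N = n - 2"
  define K where "K = (n-2) div 2"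
  define c where "c = N + 1 - 2*K"
  define E where "E = card (EE n)"
  define SF where "SF = (\<Sum>(p,q)\<in>EE n. kf u 1 n p q * (N - kf u 1 n p q))"
  define ST where "ST = (\<Sum>t<K-1. (t+1)*(t+2)*(t+3))"
  define S2 where "S2 = 2*(\<Sum>t<K-1. Wt u n t) + c * Wt u n (K-1)"
  have n4: "4 \<le> n" using assms(3) by linarith
  have K1: "1 \<le> K" "2*K \<le> N" "N \<le> 2*K+1" "2*K + 2 \<le> n" unfolding K_def N_def using n4 by auto
  have c1: "1 \<le> c" unfolding c_def using K1 by simp
  have kK: "k \<le> K - 1" unfolding K_def using assms(3) by linarith
  have kfb: "kf u 1 n i j \<le> k" using le_k_edge_iff[OF assms(4-6)] assms(7) unfolding u_def by simp
  have badE: "(i,j) \<in> EE n" using assms(4-6) unfolding EE_def by auto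
  have badR: "(i,j) \<notin> Rg 1 n k" using nb unfolding Rg_def by auto
  have h1: "crossings n u + SF = 3 * (n choose 4)"
  proof -
    have "card (SS u n) = SF"
      unfolding card_SS SF_def N_def by (intro sum.cong) (auto simp: kf_prod)
    thus ?thesis using cross_identity[of u n] crossings_CC[of n u] by simp
  qed
  have h2: "SF + S2 = E * (K*(N-K))"
  proof -
    have pe: "kf u 1 n p q * (N - kf u 1 n p q) + 2*(\<Sum>t<K-1. (t+1) - kf u 1 n p q)
        + c * (K - kf u 1 n p q) = K*(N-K)" if "(p,q) \<in> EE n" for p q
      unfolding c_def using edge_ident[of "kf u 1 n p q" K N] kf_leK[OF that, of u] K1
      unfolding K_def by simp
    have "(\<Sum>(p,q)\<in>EE n. kf u 1 n p q * (N - kf u 1 n p q) + 2*(\<Sum>t<K-1. (t+1) - kf u 1 n p q)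
        + c * (K - kf u 1 n p q)) = (\<Sum>(p,q)\<in>EE n. K*(N-K))"
      using pe by (intro sum.cong) auto
    also have "\<dots> = E * (K*(N-K))" unfolding E_def by simp
    finally have A: "(\<Sum>(p,q)\<in>EE n. kf u 1 n p q * (N - kf u 1 n p q) + 2*(\<Sum>t<K-1. (t+1) - kf u 1 n p q)
        + c * (K - kf u 1 n p q)) = E * (K*(N-K))" .
    have sw: "(\<Sum>(p,q)\<in>EE n. (\<Sum>t<K-1. (t+1) - kf u 1 n p q)) = (\<Sum>t<K-1. Wt u n t)"
      unfolding Wt_def split_def by (rule sum.swap)
    have wk: "(\<Sum>(p,q)\<in>EE n. K - kf u 1 n p q) = Wt u n (K-1)"
      unfolding Wt_def using K1 by simp
    have "(\<Sum>(p,q)\<in>EE n. kf u 1 n p q * (N - kf u 1 n p q) + 2*(\<Sum>t<K-1. (t+1) - kf u 1 n p q)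
        + c * (K - kf u 1 n p q)) = SF + 2*(\<Sum>(p,q)\<in>EE n. (\<Sum>t<K-1. (t+1) - kf u 1 n p q))
          + c * (\<Sum>(p,q)\<in>EE n. K - kf u 1 n p q)"
      unfolding SF_def by (simp add: sum.distrib sum_distrib_left split_def)
    thus ?thesis using A sw wk unfolding S2_def by simp
  qed
  have TK: "K*(K+1)*(K+2) \<le> 2 * Wt u n (K-1)"
    using W_ge[of "K-1" n u] K1 by simp
  have h3: "2*ST + c*(K*(K+1)*(K+2)) + 2 \<le> 2*S2"
  proof (cases "k < K - 1")
    case True
    have "(\<Sum>t<K-1. (t+1)*(t+2)*(t+3) + (if t = k then 2 else 0)) \<le> (\<Sum>t<K-1. 2 * Wt u n t)"
    proof (intro sum_mono)
      fix t assume t: "t \<in> {..<K-1}"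
      show "(t+1)*(t+2)*(t+3) + (if t = k then 2 else 0) \<le> 2 * Wt u n t"
      proof (cases "t = k")
        case True thus ?thesis using W_bad[of k n i j u] badE badR kfb K1 kK by simp
      next
        case False thus ?thesis using W_ge[of t n u] t K1 by simp
      qed
    qed
    moreover have "(\<Sum>t<K-1. (t+1)*(t+2)*(t+3) + (if t = k then 2 else 0)) = ST + 2"
      unfolding ST_def using True by (simp add: sum.distrib)
    ultimately have s1: "ST + 2 \<le> 2 * (\<Sum>t<K-1. Wt u n t)" by (simp add: sum_distrib_left)
    have m1: "c*(K*(K+1)*(K+2)) \<le> c * (2 * Wt u n (K-1))" using TK by (rule mult_le_mono2)
    have m2: "c * (2 * Wt u n (K-1)) = 2*(c*Wt u n (K-1))" by simp
    have gen: "\<And>(a::nat) x y z w. a+2 \<le> 2*x \<Longrightarrow> y \<le> z \<Longrightarrow> z = 2*w \<Longrightarrow> 2*a + y + 2 \<le> 2*(2*x + w)"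
      by arith
    show ?thesis unfolding S2_def by (rule gen[OF s1 m1 m2])
  next
    case False
    hence kk: "k = K - 1" using kK by simp
    have "ST \<le> (\<Sum>t<K-1. Wt u n t) * 2"
    proof -
      have "(\<Sum>t<K-1. (t+1)*(t+2)*(t+3)) \<le> (\<Sum>t<K-1. 2 * Wt u n t)"
        using W_ge K1 by (intro sum_mono) auto
      thus ?thesis unfolding ST_def by (simp add: sum_distrib_left mult.commute)
    qed
    moreover have A: "K*(K+1)*(K+2) + 2 \<le> 2 * Wt u n (K-1)"
      using W_bad[of k n i j u] badE badR kfb K1 kk by simp
    have B: "c*(K*(K+1)*(K+2) + 2) \<le> c * (2 * Wt u n (K-1))" using A by (rule mult_le_mono2)
    have C: "c*(K*(K+1)*(K+2)) + 2 \<le> c*(K*(K+1)*(K+2) + 2)" using c1 by (simp add: algebra_simps)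
    have "c*(K*(K+1)*(K+2)) + 2 \<le> c * (2 * Wt u n (K-1))" using B C by (rule le_trans[rotated])
    ultimately show ?thesis unfolding S2_def by simp
  qed
  define P where "P = K*(K+1)*(K+2)"
  define Q where "Q = (K-1)*K*(K+1)*(K+2)"
  define M where "M = K*(N-K)"
  define C4 where "C4 = n choose 4"
  have h4: "4*ST = Q"
    unfolding ST_def Q_def using sum_T[of "K-1"] K1 by simp
  have h5: "2*E = n*(n-1)" unfolding E_def by (rule card_EE)
  have key0: "6 * real (n choose 4) - real n*(real n-1)*real K*real (N-K)
     + real (K-1)*real K*real (K+1)*real (K+2)/2 + real c*real K*real (K+1)*real (K+2) = 2 * Z n"
    unfolding K_def N_def c_def by (rule key_ident[OF n4])
  have rP: "real P = real K*real (K+1)*real (K+2)" unfolding P_def by (simp only: of_nat_mult)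
  have rQ: "real Q = real (K-1)*real K*real (K+1)*real (K+2)" unfolding Q_def by (simp only: of_nat_mult)
  have rM: "real M = real K*real (N-K)" unfolding M_def by (simp only: of_nat_mult)
  have key: "6 * real C4 - real n*(real n-1)*real M + real Q/2 + real c*real P = 2 * Z n"
    using key0 unfolding rP rQ rM C4_def by (simp only: mult.assoc)
  have Zc: "real (crossings n u) = Z n" using assms(2) unfolding u_def crossing_optimal_def by simp
  have r1: "real (crossings n u) + real SF = 3 * real C4"
  proof -
    have "real (crossings n u + SF) = real (3 * C4)" using h1 unfolding C4_def by simp
    thus ?thesis by (simp only: of_nat_add of_nat_mult of_nat_numeral)
  qed
  have r2: "real SF + real S2 = real E * real M"
  proof -
    have "real (SF + S2) = real (E * M)" using h2 unfolding M_def by simp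
    thus ?thesis by (simp only: of_nat_add of_nat_mult)
  qed
  have r3: "2*real ST + real c*real P + 2 \<le> 2 * real S2"
  proof -
    have "real (2*ST + c*P + 2) \<le> real (2*S2)" using h3 unfolding P_def by (simp only: of_nat_le_iff)
    thus ?thesis by (simp only: of_nat_add of_nat_mult of_nat_numeral)
  qed
  have r4: "4*real ST = real Q"
  proof -
    have "real (4*ST) = real Q" using h4 by simp
    thus ?thesis by (simp only: of_nat_mult of_nat_numeral)
  qed
  have r5: "2*real E = real n * (real n - 1)"
  proof -
    have "real (2*E) = real (n*(n-1))" using h5 by simp
    thus ?thesis using n4 by (simp add: of_nat_diff)
  qed
  have r5': "2*(real E * real M) = real n * (real n - 1) * real M"
  proof -
    have "2*(real E * real M) = (2*real E) * real M" by simp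
    also have "\<dots> = real n * (real n - 1) * real M" unfolding r5 ..
    finally show ?thesis .
  qed
  have "2 * real (crossings n u) \<ge> 2 * Z n + 2"
    using r1 r2 r3 r4 r5' key by linarith
  thus False using Zc by simp
qed


end
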